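(* Let $G=(m,n,\boldsymbol{c},\boldsymbol{d},r_{\max},r_{\min})$ be an interbank lending game with strategy space $\boldsymbol{S}$, and let $$\Phi(\boldsymbol{s})=\sum_{j\in B}\sum_{i\in L}\bigl(r_j(\boldsymbol{s},i)-r_{\min}\bigr)s_{ij},\qquad r_j(\boldsymbol{s},z)=(r_{\min}-r_{\max})\frac{\sum_{i=1}^{z}s_{ij}}{d_j}+r_{\max}.$$ Then $\Phi$ is strictly concave over $\boldsymbol{S}$.
   Context: An interbank lending game $G=(m,n,\boldsymbol{c},\boldsymbol{d},r_{\max},r_{\min})$ consists of positive integers $m,n$, budgets $\boldsymbol{c}\in\mathbb{R}_{>0}^m$, demands $\boldsymbol{d}\in\mathbb{R}_{>0}^n$ and reals $0<r_{\min}<r_{\max}$. Lenders are $L=\{1,\dots,m\}$, borrowers $B=\{1,\dots,n\}$. Lender $i$'s strategy set is $S_i=\{s_i\in\mathbb{R}_{\ge0}^n:\sum_{j\in B}s_{ij}\le c_i\}$ and the strategy space is $\boldsymbol{S}=\prod_{i\in L}S_i$, whose elements are $\boldsymbol{s}=(s_{ij})_{i\in L,j\in B}$. *)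

theory Defs
  imports "HOL-Analysis.Analysis"
begin

text \<open>A strategy profile s is represented as a function s i j (lender i, borrower j),
  with lenders indexed 1..m and borrowers 1..n; entries outside this range are 0.\<close>

definition strategy_space :: "nat \<Rightarrow> nat \<Rightarrow> (nat \<Rightarrow> real) \<Rightarrow> (nat \<Rightarrow> nat \<Rightarrow> real) set" where
  "strategy_space m n c =
     {s. (\<forall>i\<in>{1..m}. \<forall>j\<in>{1..n}. 0 \<le> s i j)
       \<and> (\<forall>i\<in>{1..m}. (\<Sum>j=1..n. s i j) \<le> c i)
       \<and> (\<forall>i j. i \<notin> {1..m} \<or> j \<notin> {1..n} \<longrightarrow> s i j = 0)}"

definition rate :: "(nat \<Rightarrow> real) \<Rightarrow> real \<Rightarrow> real \<Rightarrow> (nat \<Rightarrow> nat \<Rightarrow> real) \<Rightarrow> nat \<Rightarrow> nat \<Rightarrow> real" where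
  "rate d rmax rmin s j z = (rmin - rmax) * (\<Sum>i=1..z. s i j) / d j + rmax"

definition potential :: "nat \<Rightarrow> nat \<Rightarrow> (nat \<Rightarrow> real) \<Rightarrow> real \<Rightarrow> real \<Rightarrow> (nat \<Rightarrow> nat \<Rightarrow> real) \<Rightarrow> real" where
  "potential m n d rmax rmin s =
     (\<Sum>j=1..n. \<Sum>i=1..m. (rate d rmax rmin s j i - rmin) * s i j)"

definition strictly_concave_on :: "(nat \<Rightarrow> nat \<Rightarrow> real) set \<Rightarrow> ((nat \<Rightarrow> nat \<Rightarrow> real) \<Rightarrow> real) \<Rightarrow> bool" where
  "strictly_concave_on S f \<longleftrightarrow>
     (\<forall>s\<in>S. \<forall>t\<in>S. \<forall>u::real. 0 \<le> u \<and> u \<le> 1 \<longrightarrow> (\<lambda>i j. u * s i j + (1 - u) * t i j) \<in> S) \<and>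
     (\<forall>s\<in>S. \<forall>t\<in>S. s \<noteq> t \<longrightarrow> (\<forall>u::real. 0 < u \<and> u < 1 \<longrightarrow>
        f (\<lambda>i j. u * s i j + (1 - u) * t i j) > u * f s + (1 - u) * f t))"

end

theory Submission
  imports Defs
begin

definition QF :: "nat \<Rightarrow> (nat \<Rightarrow> real) \<Rightarrow> real" where
  "QF m x = (\<Sum>i=1..m. \<Sum>k=1..i. x k * x i)"

lemma QF_twice: "2 * QF m x = (\<Sum>i=1..m. x i)^2 + (\<Sum>i=1..m. (x i)^2)"
proof (induction m)
  case 0 then show ?case by (simp add: QF_def)
next
  case (Suc m)
  have "QF (Suc m) x = QF m x + (\<Sum>k=1..Suc m. x k) * x (Suc m)"
    by (simp add: QF_def sum_distrib_right[symmetric] del: sum.atLeast1_atMost_eq)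
  moreover have "(\<Sum>k=1..Suc m. x k) = (\<Sum>k=1..m. x k) + x (Suc m)" by simp
  ultimately show ?case using Suc by (simp add: power2_eq_square algebra_simps)
qed

lemma QF_nonneg: "0 \<le> QF m x"
proof -
  have "0 \<le> (\<Sum>i=1..m. x i)^2 + (\<Sum>i=1..m. (x i)^2)"
    by (intro add_nonneg_nonneg sum_nonneg) auto
  then show ?thesis using QF_twice[of m x] by linarith
qed

lemma QF_pos: assumes "i \<in> {1..m}" "x i \<noteq> 0" shows "0 < QF m x"
proof -
  have "0 < (\<Sum>i=1..m. (x i)^2)"
    by (rule sum_pos2[where i=i]) (use assms in auto)
  then have "0 < (\<Sum>i=1..m. x i)^2 + (\<Sum>i=1..m. (x i)^2)"
    by (simp add: add_nonneg_pos)
  then show ?thesis using QF_twice[of m x] by linarith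
qed

lemma QF_comb:
  "QF m (\<lambda>i. u * x i + (1 - u) * y i) =
     u * QF m x + (1 - u) * QF m y - u * (1 - u) * QF m (\<lambda>i. x i - y i)"
proof -
  have "QF m (\<lambda>i. u * x i + (1 - u) * y i) =
    (\<Sum>i=1..m. \<Sum>k=1..i. u * (x k * x i) + (1 - u) * (y k * y i) - u * (1 - u) * ((x k - y k) * (x i - y i)))"
    unfolding QF_def by (intro sum.cong refl) (simp add: algebra_simps)
  also have "\<dots> = u * QF m x + (1 - u) * QF m y - u * (1 - u) * QF m (\<lambda>i. x i - y i)"
    unfolding QF_def by (simp add: sum_subtractf sum.distrib sum_distrib_left)
  finally show ?thesis .
qed

lemma column_eq:
  "(\<Sum>i=1..m. (rate d rmax rmin s j i - rmin) * s i j) =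
     (rmax - rmin) * (\<Sum>i=1..m. s i j) - (rmax - rmin) / d j * QF m (\<lambda>i. s i j)"
proof -
  have "(\<Sum>i=1..m. (rate d rmax rmin s j i - rmin) * s i j) =
     (\<Sum>i=1..m. (rmax - rmin) * s i j - (rmax - rmin) / d j * (\<Sum>k=1..i. s k j * s i j))"
  proof (intro sum.cong refl)
    fix i
    have "(\<Sum>k=1..i. s k j * s i j) = (\<Sum>k=1..i. s k j) * s i j" by (simp add: sum_distrib_right)
    then show "(rate d rmax rmin s j i - rmin) * s i j =
      (rmax - rmin) * s i j - (rmax - rmin) / d j * (\<Sum>k=1..i. s k j * s i j)"
      unfolding rate_def by (simp add: algebra_simps add_divide_distrib diff_divide_distrib)
  qed
  also have "\<dots> = (rmax - rmin) * (\<Sum>i=1..m. s i j) - (rmax - rmin) / d j * QF m (\<lambda>i. s i j)"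
    unfolding QF_def by (simp add: sum_subtractf sum_distrib_left)
  finally show ?thesis .
qed

lemma potential_eq:
  "potential m n d rmax rmin s =
    (\<Sum>j=1..n. (rmax - rmin) * (\<Sum>i=1..m. s i j) - (rmax - rmin) / d j * QF m (\<lambda>i. s i j))"
  unfolding potential_def using column_eq by simp

lemma alg_step:
  fixes K A B E qs qt q u :: real
  shows "(K * (u * A + (1 - u) * B) - E * (u * qs + (1 - u) * qt - u * (1 - u) * q))
     - (u * (K * A - E * qs) + (1 - u) * (K * B - E * qt)) = u * (1 - u) * E * q"
  by algebra

theorem lemma3p2:
  fixes m n :: nat and c d :: "nat \<Rightarrow> real" and rmax rmin :: real
  assumes "0 < m" and "0 < n"
    and "\<forall>i\<in>{1..m}. 0 < c i" and "\<forall>j\<in>{1..n}. 0 < d j"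
    and "0 < rmin" and "rmin < rmax"
  shows "strictly_concave_on (strategy_space m n c) (potential m n d rmax rmin)"
  unfolding strictly_concave_on_def
proof (intro conjI ballI allI impI)
  fix s t and u :: real
  assume s: "s \<in> strategy_space m n c" and t: "t \<in> strategy_space m n c" and u: "0 \<le> u \<and> u \<le> 1"
  show "(\<lambda>i j. u * s i j + (1 - u) * t i j) \<in> strategy_space m n c"
    unfolding strategy_space_def
  proof (intro CollectI conjI ballI allI impI)
    fix i j assume "i \<in> {1..m}" "j \<in> {1..n}"
    then show "0 \<le> u * s i j + (1 - u) * t i j"
      using s t u unfolding strategy_space_def by auto
  next
    fix i assume i: "i \<in> {1..m}"
    have "(\<Sum>j=1..n. u * s i j + (1 - u) * t i j) = u * (\<Sum>j=1..n. s i j) + (1 - u) * (\<Sum>j=1..n. t i j)"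
      by (simp add: sum.distrib sum_distrib_left)
    also have "\<dots> \<le> u * c i + (1 - u) * c i"
      using s t u i unfolding strategy_space_def
      by (intro add_mono mult_left_mono) auto
    finally show "(\<Sum>j=1..n. u * s i j + (1 - u) * t i j) \<le> c i" by (simp add: algebra_simps)
  next
    fix i j assume "i \<notin> {1..m} \<or> j \<notin> {1..n}"
    then show "u * s i j + (1 - u) * t i j = 0"
      using s t unfolding strategy_space_def by auto
  qed
next
  fix s t and u :: real
  assume s: "s \<in> strategy_space m n c" and t: "t \<in> strategy_space m n c"
    and st: "s \<noteq> t" and u: "0 < u \<and> u < 1"
  have "\<exists>i j. s i j \<noteq> t i j"
  proof (rule ccontr)
    assume "\<not> (\<exists>i j. s i j \<noteq> t i j)"
    then have "s = t" by (intro ext) simp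
    then show False using st by simp
  qed
  then obtain i j where ij: "s i j \<noteq> t i j" by blast
  have z1: "s i j = 0" if "\<not> (i \<in> {1..m} \<and> j \<in> {1..n})"
    using s that unfolding strategy_space_def by blast
  have z2: "t i j = 0" if "\<not> (i \<in> {1..m} \<and> j \<in> {1..n})"
    using t that unfolding strategy_space_def by blast
  have "i \<in> {1..m} \<and> j \<in> {1..n}"
  proof (rule ccontr)
    assume a: "\<not> (i \<in> {1..m} \<and> j \<in> {1..n})"
    show False using z1[OF a] z2[OF a] ij by simp
  qed
  then have ir: "i \<in> {1..m}" and jr: "j \<in> {1..n}" by auto
  define K where "K = rmax - rmin"
  have K: "0 < K" using assms unfolding K_def by simp
  let ?w = "\<lambda>i j. u * s i j + (1 - u) * t i j"
  have diff: "potential m n d rmax rmin ?w - (u * potential m n d rmax rmin s + (1 - u) * potential m n d rmax rmin t)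
     = (\<Sum>j=1..n. u * (1 - u) * (K / d j) * QF m (\<lambda>i. s i j - t i j))"
  proof -
    have e1: "u * potential m n d rmax rmin s + (1 - u) * potential m n d rmax rmin t
      = (\<Sum>j=1..n. u * (K * (\<Sum>i=1..m. s i j) - K / d j * QF m (\<lambda>i. s i j))
           + (1 - u) * (K * (\<Sum>i=1..m. t i j) - K / d j * QF m (\<lambda>i. t i j)))"
      unfolding potential_eq K_def[symmetric] by (simp only: sum_distrib_left sum.distrib)
    have e2: "potential m n d rmax rmin ?w = (\<Sum>j=1..n. K * (\<Sum>i=1..m. ?w i j) - K / d j * QF m (\<lambda>i. ?w i j))"
      unfolding potential_eq K_def[symmetric] by (rule refl)
    have "potential m n d rmax rmin ?w - (u * potential m n d rmax rmin s + (1 - u) * potential m n d rmax rmin t)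
      = (\<Sum>j=1..n. (K * (\<Sum>i=1..m. ?w i j) - K / d j * QF m (\<lambda>i. ?w i j))
          - (u * (K * (\<Sum>i=1..m. s i j) - K / d j * QF m (\<lambda>i. s i j))
           + (1 - u) * (K * (\<Sum>i=1..m. t i j) - K / d j * QF m (\<lambda>i. t i j))))"
      unfolding e1 e2 by (rule sum_subtractf[symmetric])
    also have "\<dots> = (\<Sum>j=1..n. u * (1 - u) * (K / d j) * QF m (\<lambda>i. s i j - t i j))"
    proof (intro sum.cong refl)
      fix j
      have ws: "(\<Sum>i=1..m. ?w i j) = u * (\<Sum>i=1..m. s i j) + (1 - u) * (\<Sum>i=1..m. t i j)"
        by (simp only: sum.distrib sum_distrib_left)
      show "(K * (\<Sum>i=1..m. ?w i j) - K / d j * QF m (\<lambda>i. ?w i j))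
          - (u * (K * (\<Sum>i=1..m. s i j) - K / d j * QF m (\<lambda>i. s i j))
           + (1 - u) * (K * (\<Sum>i=1..m. t i j) - K / d j * QF m (\<lambda>i. t i j)))
          = u * (1 - u) * (K / d j) * QF m (\<lambda>i. s i j - t i j)"
        unfolding QF_comb[of m u "\<lambda>i. s i j" "\<lambda>i. t i j"] ws
        by (rule alg_step)
    qed
    finally show ?thesis .
  qed
  have "0 < (\<Sum>j=1..n. u * (1 - u) * (K / d j) * QF m (\<lambda>i. s i j - t i j))"
  proof (rule sum_pos2[where i=j])
    show "0 < u * (1 - u) * (K / d j) * QF m (\<lambda>i. s i j - t i j)"
    proof -
      have "0 < QF m (\<lambda>i. s i j - t i j)" using QF_pos[of i m "\<lambda>i. s i j - t i j"] ir ij by simp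
      moreover have "0 < d j" using assms(4) jr by blast
      moreover have "0 < u * (1 - u)" using u by simp
      moreover have "0 < K / d j" using K \<open>0 < d j\<close> by simp
      ultimately show ?thesis by (metis mult_pos_pos)
    qed
  next
    fix j assume "j \<in> {1..n}"
    then show "0 \<le> u * (1 - u) * (K / d j) * QF m (\<lambda>i. s i j - t i j)"
    proof -
      have "0 < d j" using assms(4) \<open>j \<in> {1..n}\<close> by blast
      moreover have "0 \<le> u * (1 - u)" using u by simp
      moreover have "0 \<le> K / d j" using K \<open>0 < d j\<close> by simp
      moreover have "0 \<le> QF m (\<lambda>i. s i j - t i j)" by (rule QF_nonneg)
      ultimately show ?thesis by (metis mult_nonneg_nonneg)
    qed
  qed (use jr in auto)
  then show "potential m n d rmax rmin ?w > u * potential m n d rmax rmin s + (1 - u) * potential m n d rmax rmin t"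
    using diff by linarith
qed

end
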